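(* In the setting below (planted submatrix signal), if the multigraph $\alpha\in\mathbb{N}^{N}$ has a connected component containing at least one edge that does not contain vertex $1$, then $\kappa_\alpha=0$. In particular $\kappa_\alpha=0$ whenever $\alpha$ is disconnected.
   Context: Let $n\ge1$, $\lambda\ge0$, $\rho\in(0,1)$, $v\in\{0,1\}^n$ with i.i.d. $\mathrm{Bernoulli}(\rho)$ entries, $N=n(n+1)/2$ indexed by pairs $(i,j)$ with $1\le i\le j\le n$, $X_{ij}=\lambda v_iv_j$, and $x=v_1$. An index $\alpha=(\alpha_{ij})_{i\le j}\in\mathbb{N}^N$ is viewed as a multigraph on vertex set $[n]$ (self-loops allowed) with $\alpha_{ij}$ edges between $i$ and $j$; $|\alpha|$ is its number of edges and $V(\alpha)$ the set of vertices spanned by its edges. $\kappa_\alpha$ is defined recursively by $\kappa_\alpha=\mathbb{E}[xX^\alpha]-\sum_{0\le\beta\lneq\alpha}\kappa_\beta\binom{\alpha}{\beta}\mathbb{E}[X^{\alpha-\beta}]$, with multi-index notation $X^\alpha=\prod X_{ij}^{\alpha_{ij}}$, $\binom{\alpha}{\beta}=\prod\binom{\alpha_{ij}}{\beta_{ij}}$, $\beta\le\alpha$ entrywise, $\beta\lneq\alpha$ meaning $\beta\le\alpha$, $\beta\ne\alpha$. *)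

theory Defs
  imports "HOL-Probability.Probability"
begin

text \<open>The random vector v in {0,1}^n with i.i.d. Bernoulli(rho) entries, encoded as
  v :: nat => bool on the index set {1..n} (v i = True means v_i = 1).\<close>
definition vdist :: "nat \<Rightarrow> real \<Rightarrow> (nat \<Rightarrow> bool) pmf" where
  "vdist n \<rho> = Pi_pmf {1..n} False (\<lambda>_. bernoulli_pmf \<rho>)"

definition Ev :: "nat \<Rightarrow> real \<Rightarrow> ((nat \<Rightarrow> bool) \<Rightarrow> real) \<Rightarrow> real" where
  "Ev n \<rho> f = measure_pmf.expectation (vdist n \<rho>) f"

definition Pairs :: "nat \<Rightarrow> (nat \<times> nat) set" where
  "Pairs n = {(i, j). 1 \<le> i \<and> i \<le> j \<and> j \<le> n}"

definition Xent :: "real \<Rightarrow> (nat \<Rightarrow> bool) \<Rightarrow> nat \<times> nat \<Rightarrow> real" where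
  "Xent lam v p = lam * of_bool (v (fst p)) * of_bool (v (snd p))"

definition xsig :: "(nat \<Rightarrow> bool) \<Rightarrow> real" where
  "xsig v = of_bool (v 1)"

text \<open>Multi-indices alpha in N^N are represented as multisets of pairs (multigraphs):
  alpha_ij = count alpha (i,j).  X^alpha and binomial(alpha,beta):\<close>
definition Xpow :: "real \<Rightarrow> (nat \<Rightarrow> bool) \<Rightarrow> (nat \<times> nat) multiset \<Rightarrow> real" where
  "Xpow lam v \<alpha> = (\<Prod>p\<in>set_mset \<alpha>. Xent lam v p ^ count \<alpha> p)"

definition mbinom :: "(nat \<times> nat) multiset \<Rightarrow> (nat \<times> nat) multiset \<Rightarrow> real" where
  "mbinom \<alpha> \<beta> = (\<Prod>p\<in>set_mset \<alpha>. real (count \<alpha> p choose count \<beta> p))"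

function kappa :: "nat \<Rightarrow> real \<Rightarrow> real \<Rightarrow> (nat \<times> nat) multiset \<Rightarrow> real" where
  "kappa n lam \<rho> \<alpha> =
     Ev n \<rho> (\<lambda>v. xsig v * Xpow lam v \<alpha>)
     - (\<Sum>\<beta>\<in>{\<beta>. \<beta> \<subset># \<alpha>}. kappa n lam \<rho> \<beta> * mbinom \<alpha> \<beta> * Ev n \<rho> (\<lambda>v. Xpow lam v (\<alpha> - \<beta>)))"
  by auto
termination
  by (relation "Wellfounded.measure (\<lambda>(n, lam, \<rho>, \<alpha>). size \<alpha>)") (auto intro: mset_subset_size)

definition adj :: "(nat \<times> nat) multiset \<Rightarrow> nat \<Rightarrow> nat \<Rightarrow> bool" where
  "adj \<alpha> u w \<longleftrightarrow> (u, w) \<in># \<alpha> \<or> (w, u) \<in># \<alpha>"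

definition conn :: "(nat \<times> nat) multiset \<Rightarrow> nat \<Rightarrow> nat \<Rightarrow> bool" where
  "conn \<alpha> = (adj \<alpha>)\<^sup>*\<^sup>*"

definition verts :: "(nat \<times> nat) multiset \<Rightarrow> nat set" where
  "verts \<alpha> = fst ` set_mset \<alpha> \<union> snd ` set_mset \<alpha>"

definition has_comp_without_1 :: "(nat \<times> nat) multiset \<Rightarrow> bool" where
  "has_comp_without_1 \<alpha> \<longleftrightarrow> (\<exists>e\<in>#\<alpha>. \<not> conn \<alpha> (fst e) 1)"

definition disconnected :: "(nat \<times> nat) multiset \<Rightarrow> bool" where
  "disconnected \<alpha> \<longleftrightarrow> (\<exists>u\<in>verts \<alpha>. \<exists>w\<in>verts \<alpha>. \<not> conn \<alpha> u w)"

end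

theory Submission imports Defs begin

declare kappa.simps[simp del]

definition indv :: "nat set \<Rightarrow> (nat \<Rightarrow> bool) \<Rightarrow> real" where
  "indv A v = of_bool (\<forall>i\<in>A. v i)"

lemma prod_of_bool: "finite S \<Longrightarrow> (\<Prod>i\<in>S. (of_bool (P i) :: real)) = of_bool (\<forall>i\<in>S. P i)"
  by (induction S rule: finite_induct) auto

lemma Ev_indv:
  assumes "finite A" "0 \<le> \<rho>" "\<rho> \<le> 1"
  shows "Ev n \<rho> (indv A) = of_bool (A \<subseteq> {1..n}) * \<rho> ^ card A"
proof -
  let ?f = "\<lambda>i b. if i \<in> A then (of_bool b :: real) else 1"
  have "Ev n \<rho> (indv A) = Ev n \<rho> (\<lambda>v. of_bool (A \<subseteq> {1..n}) * (\<Prod>i\<in>{1..n}. ?f i (v i)))"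
    unfolding Ev_def
  proof (rule integral_cong_AE)
    show "AE v in measure_pmf (vdist n \<rho>). indv A v = of_bool (A \<subseteq> {1..n}) * (\<Prod>i\<in>{1..n}. ?f i (v i))"
    proof (rule AE_pmfI)
      fix v assume "v \<in> set_pmf (vdist n \<rho>)"
      then have out: "\<And>i. i \<notin> {1..n} \<Longrightarrow> v i = False"
        using set_Pi_pmf_subset[of "{1..n}" False "\<lambda>_. bernoulli_pmf \<rho>"] unfolding vdist_def by auto
      show "indv A v = of_bool (A \<subseteq> {1..n}) * (\<Prod>i\<in>{1..n}. ?f i (v i))"
      proof (cases "A \<subseteq> {1..n}")
        case True
        have "(\<Prod>i\<in>{1..n}. ?f i (v i)) = (\<Prod>i\<in>{1..n}. of_bool (i \<in> A \<longrightarrow> v i))"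
          by (intro prod.cong) auto
        also have "\<dots> = of_bool (\<forall>i\<in>{1..n}. i \<in> A \<longrightarrow> v i)"
          by (simp add: prod_of_bool)
        finally show ?thesis using True unfolding indv_def by auto
      next
        case False
        then obtain i where "i \<in> A" "i \<notin> {1..n}" by blast
        then show ?thesis using out[of i] False unfolding indv_def by auto
      qed
    qed
  qed auto
  also have "\<dots> = of_bool (A \<subseteq> {1..n}) * (\<Prod>i\<in>{1..n}. measure_pmf.expectation (bernoulli_pmf \<rho>) (?f i))"
    unfolding Ev_def vdist_def
    by (subst integral_mult_right_zero, subst expectation_prod_Pi_pmf) (auto simp: integrable_measure_pmf_finite)
  also have "\<dots> = of_bool (A \<subseteq> {1..n}) * (\<Prod>i\<in>{1..n}. if i \<in> A then \<rho> else 1)"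
    using assms by (intro arg_cong2[where f="(*)"] refl prod.cong) auto
  also have "\<dots> = of_bool (A \<subseteq> {1..n}) * \<rho> ^ card A"
    by (cases "A \<subseteq> {1..n}") (auto simp: prod.If_cases Int_absorb1)
  finally show ?thesis .
qed

lemma finite_submsets: "finite {\<beta>. \<beta> \<subseteq># (\<alpha>::'a multiset)}"
proof -
  have "{\<beta>. \<beta> \<subseteq># \<alpha>} \<subseteq> mset ` {xs. set xs \<subseteq> set_mset \<alpha> \<and> length xs \<le> size \<alpha>}"
  proof
    fix \<beta> assume "\<beta> \<in> {\<beta>. \<beta> \<subseteq># \<alpha>}"
    then have b: "\<beta> \<subseteq># \<alpha>" by simp
    obtain xs where "mset xs = \<beta>" using ex_mset by blast
    then show "\<beta> \<in> mset ` {xs. set xs \<subseteq> set_mset \<alpha> \<and> length xs \<le> size \<alpha>}"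
      using set_mset_mono[OF b] size_mset_mono[OF b] by force
  qed
  moreover have "finite {xs. set xs \<subseteq> set_mset \<alpha> \<and> length xs \<le> size \<alpha>}"
    by (rule finite_lists_length_le) simp
  ultimately show ?thesis by (meson finite_surj)
qed

lemma finite_psubmsets: "finite {\<beta>. \<beta> \<subset># (\<alpha>::'a multiset)}"
  by (rule finite_subset[OF _ finite_submsets[of \<alpha>]]) auto

lemma Xpow_prod: "Xpow lam v \<alpha> = prod_mset (image_mset (Xent lam v) \<alpha>)"
  unfolding Xpow_def by (simp add: image_prod_mset_multiplicity)

lemma verts_add: "verts (add_mset p \<alpha>) = {fst p, snd p} \<union> verts \<alpha>"
  unfolding verts_def by auto

lemma verts_plus: "verts (A + B) = verts A \<union> verts B"
  unfolding verts_def by auto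

lemma verts_empty: "verts {#} = {}"
  unfolding verts_def by auto

lemma finite_verts: "finite (verts \<alpha>)"
  unfolding verts_def by auto

lemma verts_mono: "\<beta> \<subseteq># \<alpha> \<Longrightarrow> verts \<beta> \<subseteq> verts \<alpha>"
  unfolding verts_def using set_mset_mono by blast

lemma Xpow_ind: "Xpow lam v \<alpha> = lam ^ size \<alpha> * indv (verts \<alpha>) v"
proof (induction \<alpha>)
  case empty
  then show ?case by (simp add: Xpow_prod indv_def verts_empty)
next
  case (add p \<alpha>)
  have "Xpow lam v (add_mset p \<alpha>) = Xent lam v p * Xpow lam v \<alpha>"
    by (simp add: Xpow_prod)
  then show ?case using add by (simp add: verts_add indv_def Xent_def)
qed

lemma indv_mult: "indv A v * indv B v = indv (A \<union> B) v"
  unfolding indv_def by auto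

lemma Ev_cmult: "Ev n \<rho> (\<lambda>v. c * f v) = c * Ev n \<rho> f"
  unfolding Ev_def by simp

lemma Ev_split:
  assumes "finite A" "finite B" "A \<inter> B = {}" "0 \<le> \<rho>" "\<rho> \<le> 1"
  shows "Ev n \<rho> (indv (A \<union> B)) = Ev n \<rho> (indv A) * Ev n \<rho> (indv B)"
  using assms by (simp add: Ev_indv card_Un_disjoint power_add)

lemma kappa_eq:
  "Ev n \<rho> (\<lambda>v. xsig v * Xpow lam v \<alpha>) =
   (\<Sum>\<beta>\<in>{\<beta>. \<beta> \<subseteq># \<alpha>}. kappa n lam \<rho> \<beta> * mbinom \<alpha> \<beta> * Ev n \<rho> (\<lambda>v. Xpow lam v (\<alpha> - \<beta>)))"
proof -
  have S: "{\<beta>. \<beta> \<subseteq># \<alpha>} = insert \<alpha> {\<beta>. \<beta> \<subset># \<alpha>}" by auto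
  have "mbinom \<alpha> \<alpha> = 1" unfolding mbinom_def by simp
  moreover have "Ev n \<rho> (\<lambda>v. Xpow lam v (\<alpha> - \<alpha>)) = 1"
    unfolding Ev_def by (simp add: Xpow_prod)
  moreover have "\<alpha> \<notin> {\<beta>. \<beta> \<subset># \<alpha>}" by simp
  ultimately have "(\<Sum>\<beta>\<in>{\<beta>. \<beta> \<subseteq># \<alpha>}. kappa n lam \<rho> \<beta> * mbinom \<alpha> \<beta> * Ev n \<rho> (\<lambda>v. Xpow lam v (\<alpha> - \<beta>)))
     = kappa n lam \<rho> \<alpha> + (\<Sum>\<beta>\<in>{\<beta>. \<beta> \<subset># \<alpha>}. kappa n lam \<rho> \<beta> * mbinom \<alpha> \<beta> * Ev n \<rho> (\<lambda>v. Xpow lam v (\<alpha> - \<beta>)))"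
    unfolding S using finite_psubmsets by (subst sum.insert) auto
  then show ?thesis
    by (subst (asm) kappa.simps) simp
qed

lemma mbinom_split:
  assumes "\<beta> \<subseteq># \<gamma>" "set_mset \<gamma> \<inter> set_mset \<delta> = {}"
  shows "mbinom (\<gamma> + \<delta>) \<beta> = mbinom \<gamma> \<beta>"
proof -
  have c: "count \<beta> p = 0" if "p \<in># \<delta>" for p
  proof -
    have "p \<notin># \<gamma>" using that assms(2) by auto
    then show ?thesis using assms(1) by (metis count_inI mset_subset_eqD)
  qed
  have "mbinom (\<gamma> + \<delta>) \<beta> = (\<Prod>p\<in>set_mset \<gamma> \<union> set_mset \<delta>. real (count (\<gamma> + \<delta>) p choose count \<beta> p))"
    unfolding mbinom_def by simp
  also have "\<dots> = (\<Prod>p\<in>set_mset \<gamma>. real (count (\<gamma> + \<delta>) p choose count \<beta> p)) *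
                   (\<Prod>p\<in>set_mset \<delta>. real (count (\<gamma> + \<delta>) p choose count \<beta> p))"
    using assms(2) by (simp add: prod.union_disjoint)
  also have "(\<Prod>p\<in>set_mset \<delta>. real (count (\<gamma> + \<delta>) p choose count \<beta> p)) = 1"
    using c by (intro prod.neutral) auto
  also have "(\<Prod>p\<in>set_mset \<gamma>. real (count (\<gamma> + \<delta>) p choose count \<beta> p)) = mbinom \<gamma> \<beta>"
    unfolding mbinom_def
  proof (intro prod.cong refl)
    fix p assume "p \<in> set_mset \<gamma>"
    then have "p \<notin># \<delta>" using assms(2) by auto
    then have "count \<delta> p = 0" by (simp add: not_in_iff)
    then show "real (count (\<gamma> + \<delta>) p choose count \<beta> p) = real (count \<gamma> p choose count \<beta> p)" by simp
  qed
  finally show ?thesis by simp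
qed

lemma main_lemma:
  assumes "1 \<notin> T" "\<forall>p\<in>#\<alpha>. (fst p \<in> T \<longleftrightarrow> snd p \<in> T)" "\<exists>p\<in>#\<alpha>. fst p \<in> T"
    and rho: "0 \<le> \<rho>" "\<rho> \<le> 1"
  shows "kappa n lam \<rho> \<alpha> = 0"
  using assms(2,3)
proof (induction \<alpha> rule: full_multiset_induct)
  case (less \<alpha>)
  define \<gamma> where "\<gamma> = filter_mset (\<lambda>p. fst p \<notin> T) \<alpha>"
  define \<delta> where "\<delta> = filter_mset (\<lambda>p. fst p \<in> T) \<alpha>"
  have ag: "\<alpha> = \<gamma> + \<delta>" unfolding \<gamma>_def \<delta>_def using multiset_partition[of \<alpha> "\<lambda>p. fst p \<notin> T"] by simp
  have disj: "set_mset \<gamma> \<inter> set_mset \<delta> = {}" unfolding \<gamma>_def \<delta>_def by auto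
  have vg: "verts \<gamma> \<inter> T = {}" using less.prems(1) unfolding \<gamma>_def verts_def by force
  have vd: "verts \<delta> \<subseteq> T" using less.prems(1) unfolding \<delta>_def verts_def by force
  have dne: "\<delta> \<noteq> {#}"
  proof -
    obtain p where "p \<in># \<alpha>" "fst p \<in> T" using less.prems(2) by blast
    then have "p \<in># \<delta>" unfolding \<delta>_def by simp
    then show ?thesis by auto
  qed
  let ?Tm = "\<lambda>\<beta>. kappa n lam \<rho> \<beta> * mbinom \<alpha> \<beta> * Ev n \<rho> (\<lambda>v. Xpow lam v (\<alpha> - \<beta>))"
  let ?S = "{\<beta>. \<beta> \<subseteq># \<alpha>}" and ?S1 = "{\<beta>. \<beta> \<subseteq># \<gamma>}"
  have S1S: "?S1 \<subseteq> ?S" using ag by (auto intro: subset_mset.order_trans)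
  have sumS: "sum ?Tm ?S = sum ?Tm ?S1 + sum ?Tm (?S - ?S1)"
    using sum.subset_diff[OF S1S finite_submsets, of ?Tm] by (simp add: add.commute)
  have aS2: "\<alpha> \<in> ?S - ?S1"
  proof -
    have "size \<gamma> < size \<alpha>" using dne unfolding ag by (simp add: nonempty_has_size)
    then have "\<not> \<alpha> \<subseteq># \<gamma>" using size_mset_mono by fastforce
    then show ?thesis by simp
  qed
  have zero: "?Tm \<beta> = 0" if "\<beta> \<in> ?S - ?S1 - {\<alpha>}" for \<beta>
  proof -
    have b1: "\<beta> \<subset># \<alpha>" and b2: "\<not> \<beta> \<subseteq># \<gamma>" using that by auto
    have "\<exists>p\<in>#\<beta>. fst p \<in> T"
    proof (rule ccontr)
      assume "\<not> (\<exists>p\<in>#\<beta>. fst p \<in> T)"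
      then have "filter_mset (\<lambda>p. fst p \<notin> T) \<beta> = \<beta>" by (subst filter_mset_eq_conv) auto
      then have "\<beta> = filter_mset (\<lambda>p. fst p \<notin> T) \<beta>" by simp
      also have "\<dots> \<subseteq># \<gamma>" unfolding \<gamma>_def using b1 by (intro multiset_filter_mono) simp
      finally show False using b2 by simp
    qed
    moreover have "\<forall>p\<in>#\<beta>. (fst p \<in> T \<longleftrightarrow> snd p \<in> T)"
      using less.prems(1) b1 by (meson mset_subset_eqD subset_mset.less_imp_le)
    ultimately have "kappa n lam \<rho> \<beta> = 0" using less.IH b1 by blast
    then show ?thesis by simp
  qed
  have sumS2: "sum ?Tm (?S - ?S1) = kappa n lam \<rho> \<alpha>"
  proof -
    have "sum ?Tm (?S - ?S1) = ?Tm \<alpha> + sum ?Tm (?S - ?S1 - {\<alpha>})"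
      using aS2 finite_submsets by (subst sum.remove) auto
    also have "sum ?Tm (?S - ?S1 - {\<alpha>}) = 0" using zero by (intro sum.neutral) blast
    also have "mbinom \<alpha> \<alpha> = 1" unfolding mbinom_def by simp
    also have "Ev n \<rho> (\<lambda>v. Xpow lam v (\<alpha> - \<alpha>)) = 1"
      unfolding Ev_def by (simp add: Xpow_prod)
    finally show ?thesis by simp
  qed
  have fg: "finite (verts \<gamma>)" "finite (verts \<delta>)" by (simp_all add: finite_verts)
  have Ed: "Ev n \<rho> (\<lambda>v. Xpow lam v (\<alpha> - \<beta>)) = Ev n \<rho> (\<lambda>v. Xpow lam v (\<gamma> - \<beta>)) * Ev n \<rho> (\<lambda>v. Xpow lam v \<delta>)"
    if "\<beta> \<subseteq># \<gamma>" for \<beta>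
  proof -
    have e: "\<alpha> - \<beta> = (\<gamma> - \<beta>) + \<delta>" unfolding ag by (rule subset_mset.diff_add_assoc2[OF that])
    have v1: "verts (\<gamma> - \<beta>) \<subseteq> verts \<gamma>" by (rule verts_mono) (rule diff_subset_eq_self)
    have fin: "finite (verts (\<gamma> - \<beta>))" by (simp add: finite_verts)
    have di: "verts (\<gamma> - \<beta>) \<inter> verts \<delta> = {}" using v1 vg vd by blast
    show ?thesis unfolding e Xpow_ind verts_plus
      using Ev_split[OF fin fg(2) di rho, of n]
      by (simp add: Ev_cmult power_add)
  qed
  have sumS1: "sum ?Tm ?S1 = Ev n \<rho> (\<lambda>v. Xpow lam v \<delta>) * Ev n \<rho> (\<lambda>v. xsig v * Xpow lam v \<gamma>)"
  proof -
    have "sum ?Tm ?S1 = (\<Sum>\<beta>\<in>?S1. Ev n \<rho> (\<lambda>v. Xpow lam v \<delta>) * (kappa n lam \<rho> \<beta> * mbinom \<gamma> \<beta> * Ev n \<rho> (\<lambda>v. Xpow lam v (\<gamma> - \<beta>))))"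
    proof (intro sum.cong refl)
      fix \<beta> assume "\<beta> \<in> ?S1"
      then have b: "\<beta> \<subseteq># \<gamma>" by simp
      have "mbinom \<alpha> \<beta> = mbinom \<gamma> \<beta>" unfolding ag by (rule mbinom_split[OF b disj])
      then show "?Tm \<beta> = Ev n \<rho> (\<lambda>v. Xpow lam v \<delta>) * (kappa n lam \<rho> \<beta> * mbinom \<gamma> \<beta> * Ev n \<rho> (\<lambda>v. Xpow lam v (\<gamma> - \<beta>)))"
        using Ed[OF b] by simp
    qed
    also have "\<dots> = Ev n \<rho> (\<lambda>v. Xpow lam v \<delta>) * Ev n \<rho> (\<lambda>v. xsig v * Xpow lam v \<gamma>)"
      by (simp add: sum_distrib_left[symmetric] kappa_eq[of n \<rho> lam \<gamma>])
    finally show ?thesis .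
  qed
  have Ex: "Ev n \<rho> (\<lambda>v. xsig v * Xpow lam v \<alpha>) = Ev n \<rho> (\<lambda>v. Xpow lam v \<delta>) * Ev n \<rho> (\<lambda>v. xsig v * Xpow lam v \<gamma>)"
  proof -
    have xs: "xsig v = indv {1} v" for v unfolding xsig_def indv_def by simp
    have fin: "finite ({1} \<union> verts \<gamma>)" by (simp add: finite_verts)
    have di: "({1} \<union> verts \<gamma>) \<inter> verts \<delta> = {}" using vg vd assms(1) by blast
    have "Ev n \<rho> (\<lambda>v. xsig v * Xpow lam v \<alpha>) = Ev n \<rho> (\<lambda>v. lam ^ size \<gamma> * lam ^ size \<delta> * indv ({1} \<union> verts \<gamma> \<union> verts \<delta>) v)"
      unfolding ag Xpow_ind xs verts_plus
      by (intro arg_cong[where f="Ev n \<rho>"] ext) (auto simp: power_add indv_def)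
    also have "\<dots> = Ev n \<rho> (\<lambda>v. Xpow lam v \<delta>) * Ev n \<rho> (\<lambda>v. xsig v * Xpow lam v \<gamma>)"
      unfolding Xpow_ind xs Ev_cmult
      using Ev_split[OF fin fg(2) di rho, of n]
      by (simp add: mult_ac indv_mult Ev_cmult)
    finally show ?thesis .
  qed
  show ?case
    using kappa_eq[of n \<rho> lam \<alpha>] sumS sumS1 sumS2 Ex by simp
qed

lemma conn_sym: "conn \<alpha> a b \<Longrightarrow> conn \<alpha> b a"
  unfolding conn_def
  by (induction rule: rtranclp_induct) (auto simp: adj_def intro: converse_rtranclp_into_rtranclp)

lemma conn_trans: "conn \<alpha> a b \<Longrightarrow> conn \<alpha> b c \<Longrightarrow> conn \<alpha> a c"
  unfolding conn_def by (rule rtranclp_trans)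

lemma conn_edge: "p \<in># \<alpha> \<Longrightarrow> conn \<alpha> (fst p) (snd p)"
  unfolding conn_def adj_def by (intro r_into_rtranclp) (cases p, auto)

lemma comp_kappa:
  assumes "has_comp_without_1 \<alpha>" "0 \<le> \<rho>" "\<rho> \<le> 1"
  shows "kappa n lam \<rho> \<alpha> = 0"
proof (rule main_lemma[where T="{u. \<not> conn \<alpha> u 1}"])
  show "1 \<notin> {u. \<not> conn \<alpha> u 1}" unfolding conn_def by simp
  show "\<forall>p\<in>#\<alpha>. (fst p \<in> {u. \<not> conn \<alpha> u 1}) = (snd p \<in> {u. \<not> conn \<alpha> u 1})"
    using conn_edge conn_sym conn_trans by blast
  show "\<exists>p\<in>#\<alpha>. fst p \<in> {u. \<not> conn \<alpha> u 1}"
    using assms(1) unfolding has_comp_without_1_def by simp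
qed (use assms in auto)

lemma disc_comp:
  assumes "disconnected \<alpha>" shows "has_comp_without_1 \<alpha>"
proof -
  obtain u w where u: "u \<in> verts \<alpha>" and w: "w \<in> verts \<alpha>" and nc: "\<not> conn \<alpha> u w"
    using assms unfolding disconnected_def by blast
  have "\<exists>x\<in>verts \<alpha>. \<not> conn \<alpha> x 1"
    using u w nc conn_sym conn_trans by blast
  then obtain x where x: "x \<in> verts \<alpha>" "\<not> conn \<alpha> x 1" by blast
  then obtain p where p: "p \<in># \<alpha>" "x = fst p \<or> x = snd p" unfolding verts_def by auto
  then have "\<not> conn \<alpha> (fst p) 1" using x conn_edge conn_trans conn_sym by blast
  then show ?thesis using p unfolding has_comp_without_1_def by blast
qed

theorem mainTheorem5:
  fixes n :: nat and lam \<rho> :: real and \<alpha> :: "(nat \<times> nat) multiset"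
  assumes "n \<ge> 1" and "lam \<ge> 0" and "0 < \<rho>" and "\<rho> < 1"
    and "set_mset \<alpha> \<subseteq> Pairs n"
  shows "(has_comp_without_1 \<alpha> \<longrightarrow> kappa n lam \<rho> \<alpha> = 0)
       \<and> (disconnected \<alpha> \<longrightarrow> kappa n lam \<rho> \<alpha> = 0)"
  using comp_kappa disc_comp assms(3,4) by auto

end
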